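(* Let $(a,b,c,\lambda)\in(\mathbb F^\times)^4$. For any $\triangle_q$-module $V$ and $v\in V$ the following are equivalent: (i) there exists a $\triangle_q$-module homomorphism $M_\lambda(a,b,c)\to V$ sending $m_0$ to $v$; (ii) $Bv=\theta_0^*v$, $(B-\theta_1^* )Av=(\theta_0(\theta_0^*-\theta_1^* )+\varphi_1)v$, $\beta v=\omega^*v$ and $\gamma v=\omega^\varepsilon v$, where $\omega^*=(c+c^{-1})(a+a^{-1})+(b+b^{-1})(\lambda q+\lambda^{-1}q^{-1})$ and $\omega^\varepsilon=(a+a^{-1})(b+b^{-1})+(c+c^{-1})(\lambda q+\lambda^{-1}q^{-1})$.
   Context: $\mathbb F$ is an algebraically closed field and $q\in\mathbb F^\times$ is a root of unity of order $d\notin\{1,2,4\}$. $\triangle_q$ is the unital associative $\mathbb F$-algebra with generators $A,B,C$ subject to: each of $A+\frac{qBC-q^{-1}CB}{q^2-q^{-2}}$, $B+\frac{qCA-q^{-1}AC}{q^2-q^{-2}}$, $C+\frac{qAB-q^{-1}BA}{q^2-q^{-2}}$ is central; $\alpha,\beta,\gamma$ denote these three central elements multiplied by $q+q^{-1}$. For $(a,b,c,\lambda)\in(\mathbb F^\times)^4$ and $i\in\mathbb N$: $\theta_i=a\lambda^{-1}q^{2i}+a^{-1}\lambda q^{-2i}$, $\theta_i^*=b\lambda^{-1}q^{2i}+b^{-1}\lambda q^{-2i}$, $\varphi_i=a^{-1}b^{-1}\lambda q(q^i-q^{-i})(\lambda^{-1}q^{i-1}-\lambda q^{1-i})(q^{-i}-abc\lambda^{-1}q^{i-1})(q^{-i}-abc^{-1}\lambda^{-1}q^{i-1})$.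 The Verma module $M_\lambda(a,b,c)$ is the $\triangle_q$-module with basis $\{m_i\}_{i\in\mathbb N}$ such that $(A-\theta_i)m_i=m_{i+1}$, $(B-\theta_i^* )m_i=\varphi_im_{i-1}$ for all $i$ ($m_{-1}$ arbitrary), and $\alpha,\beta,\gamma$ act as the scalars $(b+b^{-1})(c+c^{-1})+(a+a^{-1})(\lambda q+\lambda^{-1}q^{-1})$, $(c+c^{-1})(a+a^{-1})+(b+b^{-1})(\lambda q+\lambda^{-1}q^{-1})$, $(a+a^{-1})(b+b^{-1})+(c+c^{-1})(\lambda q+\lambda^{-1}q^{-1})$ respectively. *)

theory Defs
  imports Main "HOL-Computational_Algebra.Polynomial" "HOL-Library.Poly_Mapping"
begin

definition root_of_unity_order :: "'f::field \<Rightarrow> nat \<Rightarrow> bool" where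
  "root_of_unity_order q d \<longleftrightarrow> 0 < d \<and> q ^ d = 1 \<and> (\<forall>k. 0 < k \<and> k < d \<longrightarrow> q ^ k \<noteq> 1)"

definition theta :: "'f::field \<Rightarrow> 'f \<Rightarrow> 'f \<Rightarrow> nat \<Rightarrow> 'f" where
  "theta q a lam i = a / lam * q powi (2 * int i) + lam / a * q powi (- 2 * int i)"

definition theta_s :: "'f::field \<Rightarrow> 'f \<Rightarrow> 'f \<Rightarrow> nat \<Rightarrow> 'f" where
  "theta_s q b lam i = b / lam * q powi (2 * int i) + lam / b * q powi (- 2 * int i)"

definition phi :: "'f::field \<Rightarrow> 'f \<Rightarrow> 'f \<Rightarrow> 'f \<Rightarrow> 'f \<Rightarrow> nat \<Rightarrow> 'f" where
  "phi q a b c lam i =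
     lam * q / (a * b)
     * (q powi int i - q powi (- int i))
     * (q powi (int i - 1) / lam - lam * q powi (1 - int i))
     * (q powi (- int i) - a * b * c / lam * q powi (int i - 1))
     * (q powi (- int i) - a * b / (c * lam) * q powi (int i - 1))"

text \<open>A Delta_q-module is a vector space V (given by its scalar multiplication) together
  with three linear operators A, B, C on V such that each of the three defining elements
  acts by an operator commuting with the actions of A, B, C (i.e. is central).\<close>

definition alpha_op :: "('f::field \<Rightarrow> 'v::ab_group_add \<Rightarrow> 'v) \<Rightarrow> 'f \<Rightarrow> ('v \<Rightarrow> 'v) \<Rightarrow> ('v \<Rightarrow> 'v) \<Rightarrow> ('v \<Rightarrow> 'v) \<Rightarrow> 'v \<Rightarrow> 'v" where
  "alpha_op sc q A B C v = sc (q + inverse q)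
     (A v + sc (inverse (q^2 - inverse (q^2))) (sc q (B (C v)) - sc (inverse q) (C (B v))))"

definition beta_op :: "('f::field \<Rightarrow> 'v::ab_group_add \<Rightarrow> 'v) \<Rightarrow> 'f \<Rightarrow> ('v \<Rightarrow> 'v) \<Rightarrow> ('v \<Rightarrow> 'v) \<Rightarrow> ('v \<Rightarrow> 'v) \<Rightarrow> 'v \<Rightarrow> 'v" where
  "beta_op sc q A B C v = sc (q + inverse q)
     (B v + sc (inverse (q^2 - inverse (q^2))) (sc q (C (A v)) - sc (inverse q) (A (C v))))"

definition gamma_op :: "('f::field \<Rightarrow> 'v::ab_group_add \<Rightarrow> 'v) \<Rightarrow> 'f \<Rightarrow> ('v \<Rightarrow> 'v) \<Rightarrow> ('v \<Rightarrow> 'v) \<Rightarrow> ('v \<Rightarrow> 'v) \<Rightarrow> 'v \<Rightarrow> 'v" where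
  "gamma_op sc q A B C v = sc (q + inverse q)
     (C v + sc (inverse (q^2 - inverse (q^2))) (sc q (A (B v)) - sc (inverse q) (B (A v))))"

definition delta_module :: "('f::field \<Rightarrow> 'v::ab_group_add \<Rightarrow> 'v) \<Rightarrow> 'f \<Rightarrow> ('v \<Rightarrow> 'v) \<Rightarrow> ('v \<Rightarrow> 'v) \<Rightarrow> ('v \<Rightarrow> 'v) \<Rightarrow> bool" where
  "delta_module sc q A B C \<longleftrightarrow>
     vector_space sc \<and>
     Vector_Spaces.linear sc sc A \<and> Vector_Spaces.linear sc sc B \<and> Vector_Spaces.linear sc sc C \<and>
     (\<forall>Z \<in> {alpha_op sc q A B C, beta_op sc q A B C, gamma_op sc q A B C}.
        \<forall>X \<in> {A, B, C}. Z \<circ> X = X \<circ> Z)"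

definition delta_hom ::
  "('f::field \<Rightarrow> 'u::ab_group_add \<Rightarrow> 'u) \<Rightarrow> ('u \<Rightarrow> 'u) \<Rightarrow> ('u \<Rightarrow> 'u) \<Rightarrow> ('u \<Rightarrow> 'u) \<Rightarrow>
   ('f \<Rightarrow> 'v::ab_group_add \<Rightarrow> 'v) \<Rightarrow> ('v \<Rightarrow> 'v) \<Rightarrow> ('v \<Rightarrow> 'v) \<Rightarrow> ('v \<Rightarrow> 'v) \<Rightarrow> ('u \<Rightarrow> 'v) \<Rightarrow> bool" where
  "delta_hom sc1 A1 B1 C1 sc2 A2 B2 C2 f \<longleftrightarrow>
     Vector_Spaces.linear sc1 sc2 f \<and>
     (\<forall>x. f (A1 x) = A2 (f x)) \<and> (\<forall>x. f (B1 x) = B2 (f x)) \<and> (\<forall>x. f (C1 x) = C2 (f x))"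

text \<open>Underlying space: finitely supported coefficient sequences (nat to F); the basis
  vector m_i is Poly_Mapping.single i 1.\<close>

definition vscale :: "'f::field \<Rightarrow> (nat \<Rightarrow>\<^sub>0 'f) \<Rightarrow> (nat \<Rightarrow>\<^sub>0 'f)" where
  "vscale t x = Abs_poly_mapping (\<lambda>i. t * Poly_Mapping.lookup x i)"

definition verma_m :: "nat \<Rightarrow> (nat \<Rightarrow>\<^sub>0 'f::field)" where
  "verma_m i = Poly_Mapping.single i 1"

text \<open>A m_i = theta_i m_i + m_{i+1}\<close>
definition verma_A :: "'f::field \<Rightarrow> 'f \<Rightarrow> 'f \<Rightarrow> 'f \<Rightarrow> 'f \<Rightarrow> (nat \<Rightarrow>\<^sub>0 'f) \<Rightarrow> (nat \<Rightarrow>\<^sub>0 'f)" where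
  "verma_A q a b c lam x = Abs_poly_mapping
     (\<lambda>i. theta q a lam i * Poly_Mapping.lookup x i + (if i = 0 then 0 else Poly_Mapping.lookup x (i - 1)))"

text \<open>B m_i = theta^*_i m_i + varphi_i m_{i-1}\<close>
definition verma_B :: "'f::field \<Rightarrow> 'f \<Rightarrow> 'f \<Rightarrow> 'f \<Rightarrow> 'f \<Rightarrow> (nat \<Rightarrow>\<^sub>0 'f) \<Rightarrow> (nat \<Rightarrow>\<^sub>0 'f)" where
  "verma_B q a b c lam x = Abs_poly_mapping
     (\<lambda>i. theta_s q b lam i * Poly_Mapping.lookup x i + phi q a b c lam (Suc i) * Poly_Mapping.lookup x (Suc i))"

definition omega_a :: "'f::field \<Rightarrow> 'f \<Rightarrow> 'f \<Rightarrow> 'f \<Rightarrow> 'f \<Rightarrow> 'f" where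
  "omega_a q a b c lam = (b + inverse b) * (c + inverse c) + (a + inverse a) * (lam * q + inverse lam * inverse q)"

definition omega_b :: "'f::field \<Rightarrow> 'f \<Rightarrow> 'f \<Rightarrow> 'f \<Rightarrow> 'f \<Rightarrow> 'f" where
  "omega_b q a b c lam = (c + inverse c) * (a + inverse a) + (b + inverse b) * (lam * q + inverse lam * inverse q)"

definition omega_c :: "'f::field \<Rightarrow> 'f \<Rightarrow> 'f \<Rightarrow> 'f \<Rightarrow> 'f \<Rightarrow> 'f" where
  "omega_c q a b c lam = (a + inverse a) * (b + inverse b) + (c + inverse c) * (lam * q + inverse lam * inverse q)"

text \<open>C is determined by the requirement that gamma acts as the scalar omega_c:
  C = omega_c/(q+q^{-1}) - (qAB - q^{-1}BA)/(q^2-q^{-2}).\<close>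
definition verma_C :: "'f::field \<Rightarrow> 'f \<Rightarrow> 'f \<Rightarrow> 'f \<Rightarrow> 'f \<Rightarrow> (nat \<Rightarrow>\<^sub>0 'f) \<Rightarrow> (nat \<Rightarrow>\<^sub>0 'f)" where
  "verma_C q a b c lam x =
     vscale (omega_c q a b c lam / (q + inverse q)) x
     - vscale (inverse (q^2 - inverse (q^2)))
         (vscale q (verma_A q a b c lam (verma_B q a b c lam x))
          - vscale (inverse q) (verma_B q a b c lam (verma_A q a b c lam x)))"

end

theory Submission
  imports Defs
begin

lemma lookup_vscale[simp]: "Poly_Mapping.lookup (vscale t x) = (\<lambda>i. t * Poly_Mapping.lookup x i)"
  unfolding vscale_def
  by (rule lookup_Abs_poly_mapping, rule finite_subset[of _ "Poly_Mapping.keys x"]) (auto simp: Poly_Mapping.in_keys_iff)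

lemma lookup_verma_A[simp]: "Poly_Mapping.lookup (verma_A q a b c lam x) =
   (\<lambda>i. theta q a lam i * Poly_Mapping.lookup x i + (if i = 0 then 0 else Poly_Mapping.lookup x (i - 1)))"
  unfolding verma_A_def
proof (rule lookup_Abs_poly_mapping, rule finite_subset[of _ "Poly_Mapping.keys x \<union> Suc ` Poly_Mapping.keys x"])
  show "{i. theta q a lam i * Poly_Mapping.lookup x i + (if i = 0 then 0 else Poly_Mapping.lookup x (i - 1)) \<noteq> 0}
    \<subseteq> Poly_Mapping.keys x \<union> Suc ` Poly_Mapping.keys x"
  proof
    fix i assume "i \<in> {i. theta q a lam i * Poly_Mapping.lookup x i + (if i = 0 then 0 else Poly_Mapping.lookup x (i - 1)) \<noteq> 0}"
    then show "i \<in> Poly_Mapping.keys x \<union> Suc ` Poly_Mapping.keys x"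
      by (cases i) (auto simp: Poly_Mapping.in_keys_iff split: if_splits)
  qed
qed auto

lemma lookup_verma_B[simp]: "Poly_Mapping.lookup (verma_B q a b c lam x) =
   (\<lambda>i. theta_s q b lam i * Poly_Mapping.lookup x i + phi q a b c lam (Suc i) * Poly_Mapping.lookup x (Suc i))"
  unfolding verma_B_def
proof (rule lookup_Abs_poly_mapping, rule finite_subset[of _ "Poly_Mapping.keys x \<union> (\<lambda>i. i - 1) ` Poly_Mapping.keys x"])
  show "{i. theta_s q b lam i * Poly_Mapping.lookup x i + phi q a b c lam (Suc i) * Poly_Mapping.lookup x (Suc i) \<noteq> 0}
    \<subseteq> Poly_Mapping.keys x \<union> (\<lambda>i. i - 1) ` Poly_Mapping.keys x"
  proof
    fix i assume "i \<in> {i. theta_s q b lam i * Poly_Mapping.lookup x i + phi q a b c lam (Suc i) * Poly_Mapping.lookup x (Suc i) \<noteq> 0}"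
    then have "Poly_Mapping.lookup x i \<noteq> 0 \<or> Poly_Mapping.lookup x (Suc i) \<noteq> 0" by auto
    then show "i \<in> Poly_Mapping.keys x \<union> (\<lambda>i. i - 1) ` Poly_Mapping.keys x"
      by (auto simp: Poly_Mapping.in_keys_iff image_iff intro: bexI[of _ "Suc i"])
  qed
qed auto

lemma vscale_vs: "vector_space (vscale :: 'f::field \<Rightarrow> _)"
  by unfold_locales (auto intro!: poly_mapping_eqI simp: lookup_add algebra_simps)

lemma verma_A_lin: "Vector_Spaces.linear vscale vscale (verma_A q a b c lam)"
  unfolding Vector_Spaces.linear_iff
  by (auto simp: vscale_vs lookup_add algebra_simps intro!: poly_mapping_eqI)

lemma verma_B_lin: "Vector_Spaces.linear vscale vscale (verma_B q a b c lam)"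
  unfolding Vector_Spaces.linear_iff
  by (auto simp: vscale_vs lookup_add algebra_simps intro!: poly_mapping_eqI)

lemma lookup_m: "Poly_Mapping.lookup (verma_m i) j = (if i = j then 1 else 0)"
  by (simp add: verma_m_def lookup_single when_def)


lemma powi_aux:
  fixes q :: "'f::field" assumes q: "q \<noteq> 0"
  shows "q powi (2 * int i) = (q^i)^2" "q powi (- 2 * int i) = inverse ((q^i)^2)"
    "q powi int i = q^i" "q powi (- int i) = inverse (q^i)"
    "q powi (int i - 1) = q^i / q" "q powi (1 - int i) = q / q^i"
proof -
  have "q powi (2 * int i) = q ^ (2*i)" by (metis of_nat_mult of_nat_numeral power_int_of_nat)
  then show "q powi (2 * int i) = (q^i)^2" by (simp add: power_mult mult.commute)
  have "q powi (- 2 * int i) = inverse (q powi (2 * int i))" by (metis minus_mult_left power_int_minus)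
  then show "q powi (- 2 * int i) = inverse ((q^i)^2)" using \<open>q powi (2 * int i) = (q^i)^2\<close> by simp
  show "q powi int i = q^i" by simp
  show "q powi (- int i) = inverse (q^i)" by (simp add: power_int_minus)
  show "q powi (int i - 1) = q^i / q" using q by (simp add: power_int_diff)
  show "q powi (1 - int i) = q / q^i" using q by (simp add: power_int_diff)
qed

lemma theta_x: "theta q a lam i = a / lam * (q^i)^2 + lam / a * inverse ((q^i)^2)" if "q \<noteq> 0"
  by (unfold theta_def powi_aux[OF that]) (rule refl)
lemma theta_s_x: "theta_s q b lam i = b / lam * (q^i)^2 + lam / b * inverse ((q^i)^2)" if "q \<noteq> 0"
  by (unfold theta_s_def powi_aux[OF that]) (rule refl)
lemma phi_x: "phi q a b c lam i = lam * q / (a * b)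
     * (q^i - inverse (q^i))
     * (q^i / q / lam - lam * (q / q^i))
     * (inverse (q^i) - a * b * c / lam * (q^i / q))
     * (inverse (q^i) - a * b / (c * lam) * (q^i / q))" if "q \<noteq> 0"
  by (unfold phi_def powi_aux[OF that]) (rule refl)


lemma I0: fixes q b lam :: "'f::field"
  assumes q0: "q \<noteq> 0" and b0: "b \<noteq> 0" and l0: "lam \<noteq> 0"
  shows "theta_s q b lam i - (q^2 + inverse (q^2)) * theta_s q b lam (Suc i) + theta_s q b lam (Suc (Suc i)) = 0"
proof -
  obtain x where x: "q^i = x" "x \<noteq> 0" using q0 by simp
  show ?thesis
    unfolding theta_s_x[OF q0] power_Suc x(1)
    using q0 b0 l0 x(2)
    by (simp add: field_simps)
qed

lemma I1: fixes q a b c lam :: "'f::field"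
  assumes q0: "q \<noteq> 0" and a0: "a \<noteq> 0" and b0: "b \<noteq> 0" and c0: "c \<noteq> 0" and l0: "lam \<noteq> 0"
  shows "phi q a b c lam i - (q^2 + inverse (q^2)) * phi q a b c lam (Suc i) + phi q a b c lam (Suc (Suc i))
    = (q^2 + inverse (q^2) - 1) * (theta q a lam i * theta_s q b lam i + theta q a lam (Suc i) * theta_s q b lam (Suc i))
      - theta q a lam (Suc i) * theta_s q b lam i - theta q a lam i * theta_s q b lam (Suc i)
      - (q - inverse q)^2 * omega_c q a b c lam"
proof -
  obtain x where x: "q^i = x" "x \<noteq> 0" using q0 by simp
  show ?thesis
    unfolding theta_x[OF q0] theta_s_x[OF q0] phi_x[OF q0] power_Suc omega_c_def x(1)
    using q0 a0 b0 c0 l0 x(2)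
    by (simp add: field_simps) algebra
qed

lemma T1: fixes q a lam :: "'f::field"
  assumes q0: "q \<noteq> 0" and a0: "a \<noteq> 0" and l0: "lam \<noteq> 0"
  shows "theta q a lam i - (q^2 + inverse (q^2)) * theta q a lam (Suc i) + theta q a lam (Suc (Suc i)) = 0"
proof -
  obtain x where x: "q^i = x" "x \<noteq> 0" using q0 by simp
  show ?thesis
    unfolding theta_x[OF q0] power_Suc x(1)
    using q0 a0 l0 x(2)
    by (simp add: field_simps)
qed

lemma I3: fixes q a lam :: "'f::field"
  assumes q0: "q \<noteq> 0" and a0: "a \<noteq> 0" and l0: "lam \<noteq> 0"
  shows "(theta q a lam (Suc i))^2 + (theta q a lam i)^2
     - (q^2 + inverse (q^2)) * theta q a lam i * theta q a lam (Suc i) + (q^2 - inverse (q^2))^2 = 0"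
proof -
  obtain x where x: "q^i = x" "x \<noteq> 0" using q0 by simp
  show ?thesis
    unfolding theta_x[OF q0] power_Suc x(1)
    using q0 a0 l0 x(2)
    by (simp add: field_simps) algebra
qed

lemma I2: fixes q a b c lam :: "'f::field"
  assumes q0: "q \<noteq> 0" and a0: "a \<noteq> 0" and b0: "b \<noteq> 0" and c0: "c \<noteq> 0" and l0: "lam \<noteq> 0"
  shows "phi q a b c lam i * (theta q a lam i - theta q a lam (Suc i))
     + phi q a b c lam (Suc i) * (theta q a lam i + theta q a lam (Suc i) - (q^2 + inverse (q^2)) * theta q a lam i)
   = (q^2 - inverse (q^2)) * (q - inverse q) * omega_b q a b c lam
     - (q^2 - inverse (q^2))^2 * theta_s q b lam i
     - (q - inverse q)^2 * omega_c q a b c lam * theta q a lam i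
     + (q - inverse q)^2 * (theta q a lam i)^2 * theta_s q b lam i"
proof -
  obtain x where x: "q^i = x" "x \<noteq> 0" using q0 by simp
  show ?thesis
    unfolding theta_x[OF q0] theta_s_x[OF q0] phi_x[OF q0] power_Suc omega_c_def omega_b_def x(1)
    using q0 a0 b0 c0 l0 x(2)
    by (simp add: field_simps) algebra
qed


locale DM =
  fixes sc :: "'f::field \<Rightarrow> 'v::ab_group_add \<Rightarrow> 'v" and q :: 'f and A B C :: "'v \<Rightarrow> 'v"
  assumes vs: "vector_space sc"
    and lA: "Vector_Spaces.linear sc sc A" and lB: "Vector_Spaces.linear sc sc B"
    and lC: "Vector_Spaces.linear sc sc C"
    and cb: "beta_op sc q A B C \<circ> A = A \<circ> beta_op sc q A B C"
    and cg: "gamma_op sc q A B C \<circ> A = A \<circ> gamma_op sc q A B C"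
    and q0: "q \<noteq> 0" and q4: "q^4 \<noteq> 1"
begin

sublocale V: vector_space sc by (rule vs)
sublocale LA: module_hom sc sc A using lA by (simp add: module_hom_iff_linear)
sublocale LB: module_hom sc sc B using lB by (simp add: module_hom_iff_linear)
sublocale LC: module_hom sc sc C using lC by (simp add: module_hom_iff_linear)

lemma pnz: "q + inverse q \<noteq> 0"
proof
  assume h: "q + inverse q = 0"
  have "q^2 + 1 = q * (q + inverse q)" using q0 by (simp add: algebra_simps power2_eq_square)
  then have "q^2 = -1" using h by (simp add: eq_neg_iff_add_eq_0)
  then have "q^4 = 1" by (metis power2_minus power_mult mult.commute one_power2 numeral_Bit0 numeral_One mult_2)
  with q4 show False by simp
qed

lemma snz: "q^2 - inverse (q^2) \<noteq> 0"
proof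
  assume h: "q^2 - inverse (q^2) = 0"
  have "q^4 - 1 = q^2 * (q^2 - inverse (q^2))" using q0 by (simp add: algebra_simps power2_eq_square power4_eq_xxxx)
  then have "q^4 = 1" using h by simp
  with q4 show False by simp
qed

lemma gamma_diff: "gamma_op sc q A B C (x - y) = gamma_op sc q A B C x - gamma_op sc q A B C y"
  unfolding gamma_op_def LA.diff LB.diff LC.diff
  by (simp only: V.scale_right_diff_distrib V.scale_right_distrib V.scale_scale) (simp add: diff_add_eq add_diff_eq diff_diff_eq2 diff_diff_eq add_ac)
lemma gamma_scale: "gamma_op sc q A B C (sc t x) = sc t (gamma_op sc q A B C x)"
  unfolding gamma_op_def LA.scale LB.scale LC.scale V.scale_scale
  by (simp add: V.scale_right_diff_distrib V.scale_right_distrib mult_ac)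
lemma beta_diff: "beta_op sc q A B C (x - y) = beta_op sc q A B C x - beta_op sc q A B C y"
  unfolding beta_op_def LA.diff LB.diff LC.diff
  by (simp only: V.scale_right_diff_distrib V.scale_right_distrib V.scale_scale) (simp add: diff_add_eq add_diff_eq diff_diff_eq2 diff_diff_eq add_ac)
lemma beta_scale: "beta_op sc q A B C (sc t x) = sc t (beta_op sc q A B C x)"
  unfolding beta_op_def LA.scale LB.scale LC.scale V.scale_scale
  by (simp add: V.scale_right_diff_distrib V.scale_right_distrib mult_ac)

lemma C_eq:
  assumes "gamma_op sc q A B C y = sc w y"
  shows "C y = sc (w / (q + inverse q)) y
     - sc (inverse (q^2 - inverse (q^2))) (sc q (A (B y)) - sc (inverse q) (B (A y)))"
proof -
  let ?p = "q + inverse q" and ?Z = "sc (inverse (q^2 - inverse (q^2))) (sc q (A (B y)) - sc (inverse q) (B (A y)))"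
  have "sc ?p (C y + ?Z) = sc w y" using assms by (simp add: gamma_op_def)
  then have "sc (inverse ?p) (sc ?p (C y + ?Z)) = sc (inverse ?p) (sc w y)" by simp
  then have "C y + ?Z = sc (w / ?p) y" using pnz by (simp only: V.scale_scale) (simp add: divide_inverse mult.commute)
  then show ?thesis by (simp add: eq_diff_eq)
qed

end


locale DM2 = DM +
  fixes a b c lam :: 'a and v :: 'b
  assumes a0: "a \<noteq> 0" and b0: "b \<noteq> 0" and c0: "c \<noteq> 0" and l0: "lam \<noteq> 0"
    and h1: "B v = sc (theta_s q b lam 0) v"
    and h2: "B (A v) - sc (theta_s q b lam 1) (A v)
          = sc (theta q a lam 0 * (theta_s q b lam 0 - theta_s q b lam 1) + phi q a b c lam 1) v"
    and h3: "beta_op sc q A B C v = sc (omega_b q a b c lam) v"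
    and h4: "gamma_op sc q A B C v = sc (omega_c q a b c lam) v"
begin

abbreviation "th \<equiv> theta q a lam"
abbreviation "ts \<equiv> theta_s q b lam"
abbreviation "ph \<equiv> phi q a b c lam"

primrec vv :: "nat \<Rightarrow> 'b" where
  "vv 0 = v"
| "vv (Suc i) = A (vv i) - sc (th i) (vv i)"

lemma A_vv: "A (vv i) = vv (Suc i) + sc (th i) (vv i)"
  by simp

declare vv.simps(2)[simp del]

lemma gamma_vv: "gamma_op sc q A B C (vv i) = sc (omega_c q a b c lam) (vv i)"
proof (induction i)
  case 0 then show ?case using h4 by simp
next
  case (Suc i)
  note vv.simps(2)[simp]
  have "gamma_op sc q A B C (A (vv i)) = A (gamma_op sc q A B C (vv i))"
    using cg by (metis comp_apply)
  then show ?case using Suc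
    by (simp add: gamma_diff gamma_scale LA.scale V.scale_right_diff_distrib mult.commute)
qed

lemma beta_vv: "beta_op sc q A B C (vv i) = sc (omega_b q a b c lam) (vv i)"
proof (induction i)
  case 0 then show ?case using h3 by simp
next
  case (Suc i)
  note vv.simps(2)[simp]
  have "beta_op sc q A B C (A (vv i)) = A (beta_op sc q A B C (vv i))"
    using cb by (metis comp_apply)
  then show ?case using Suc
    by (simp add: beta_diff beta_scale LA.scale V.scale_right_diff_distrib mult.commute)
qed

lemma gamma_Avv: "gamma_op sc q A B C (A (vv i)) = sc (omega_c q a b c lam) (A (vv i))"
proof -
  have "gamma_op sc q A B C (A (vv i)) = A (gamma_op sc q A B C (vv i))"
    using cg by (metis comp_apply)
  then show ?thesis by (simp add: gamma_vv LA.scale)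
qed

lemma ph0: "ph 0 = 0" by (simp add: phi_def)

definition Lc :: "nat \<Rightarrow> 'a \<Rightarrow> 'a \<Rightarrow> 'a \<Rightarrow> 'a \<Rightarrow> 'a \<Rightarrow> 'b" where
  "Lc i x0 x1 x2 x3 x4 = sc (ph i * x0) (vv (i - 1)) + sc x1 (vv i) + sc x2 (vv (Suc i))
     + sc x3 (vv (Suc (Suc i))) + sc x4 (B (vv (Suc (Suc i))))"

lemma L_add: "Lc i x0 x1 x2 x3 x4 + Lc i y0 y1 y2 y3 y4 = Lc i (x0+y0) (x1+y1) (x2+y2) (x3+y3) (x4+y4)"
  unfolding Lc_def by (simp add: V.scale_left_distrib distrib_left add_ac)

lemma L_diff: "Lc i x0 x1 x2 x3 x4 - Lc i y0 y1 y2 y3 y4 = Lc i (x0-y0) (x1-y1) (x2-y2) (x3-y3) (x4-y4)"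
  unfolding Lc_def by (simp add: V.scale_left_diff_distrib right_diff_distrib diff_add_eq add_diff_eq diff_diff_eq2 diff_diff_eq add_ac)

lemma L_scale: "sc t (Lc i x0 x1 x2 x3 x4) = Lc i (t*x0) (t*x1) (t*x2) (t*x3) (t*x4)"
  unfolding Lc_def by (simp add: V.scale_right_distrib mult_ac)

lemma vv_L: "vv i = Lc i 0 1 0 0 0"
  unfolding Lc_def by simp

lemma A_L: "A (Lc i x0 x1 x2 0 0) = Lc i (x0 * th (i - 1)) (ph i * x0 + x1 * th i) (x1 + x2 * th (Suc i)) x2 0"
proof (cases i)
  case 0
  then show ?thesis unfolding Lc_def
    by (simp del: vv.simps add: A_vv ph0 LA.add LA.scale V.scale_right_distrib V.scale_left_distrib add_ac mult.commute)
next
  case (Suc j)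
  then show ?thesis unfolding Lc_def
    by (simp del: vv.simps add: A_vv LA.add LA.scale V.scale_right_distrib V.scale_left_distrib add_ac mult_ac)
qed

definition "P i \<longleftrightarrow> B (vv i) = sc (ts i) (vv i) + sc (ph i) (vv (i - 1))"

lemma B_L: assumes "P i" "P (Suc i)"
  shows "B (Lc i 0 x1 x2 x3 0) = Lc i x1 (x1 * ts i + x2 * ph (Suc i)) (x2 * ts (Suc i)) 0 x3"
  using assms unfolding Lc_def P_def
  by (simp add: LB.add LB.scale V.scale_right_distrib V.scale_left_distrib add_ac mult_ac)

lemma key:
  assumes "Lc i e0 e1 e2 e3 e4 = Lc i f0 f1 f2 f3 f4"
    and "ph i * e0 = ph i * f0" "e1 = f1"
    and "e2 - f2 = (f4 - e4) * ph (Suc (Suc i))" "e3 - f3 = (f4 - e4) * ts (Suc (Suc i))"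
    and "e4 \<noteq> f4"
  shows "P (Suc (Suc i))"
proof -
  let ?W = "B (vv (Suc (Suc i)))" and ?k = "e4 - f4"
  have z: "ph i * (e0 - f0) = 0" using assms(2) by (simp add: right_diff_distrib)
  have "Lc i e0 e1 e2 e3 e4 - Lc i f0 f1 f2 f3 f4 = 0" using assms(1) by simp
  then have "Lc i 0 0 (- ?k * ph (Suc (Suc i))) (- ?k * ts (Suc (Suc i))) ?k = 0"
    unfolding L_diff using assms(2-5) z by (simp add: Lc_def)
  then have "(sc (- ?k * ph (Suc (Suc i))) (vv (Suc i)) + sc (- ?k * ts (Suc (Suc i))) (vv (Suc (Suc i)))) + sc ?k ?W = 0"
    unfolding Lc_def by (simp only: mult_zero_right V.scale_zero_left add_0_left add.assoc)
  then have "sc ?k ?W = - (sc (- ?k * ph (Suc (Suc i))) (vv (Suc i)) + sc (- ?k * ts (Suc (Suc i))) (vv (Suc (Suc i))))"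
    by (metis neg_eq_iff_add_eq_0)
  also have "\<dots> = sc ?k (sc (ts (Suc (Suc i))) (vv (Suc (Suc i))) + sc (ph (Suc (Suc i))) (vv (Suc i)))"
    by (simp only: V.scale_right_distrib V.scale_scale minus_add_distrib V.scale_minus_left[symmetric] mult_minus_left minus_minus mult.commute add.commute)
  finally have "sc ?k ?W = sc ?k (sc (ts (Suc (Suc i))) (vv (Suc (Suc i))) + sc (ph (Suc (Suc i))) (vv (Suc i)))" .
  then have "sc (inverse ?k) (sc ?k ?W) = sc (inverse ?k) (sc ?k (sc (ts (Suc (Suc i))) (vv (Suc (Suc i))) + sc (ph (Suc (Suc i))) (vv (Suc i))))"
    by simp
  then show ?thesis using assms(6) unfolding P_def by (simp del: V.scale_right_distrib)
qed

end


context DM begin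

definition G :: "'v \<Rightarrow> 'f \<Rightarrow> 'f \<Rightarrow> 'f \<Rightarrow> 'f \<Rightarrow> 'f \<Rightarrow> 'f \<Rightarrow> 'f \<Rightarrow> 'f \<Rightarrow> 'v" where
  "G x c0 c1 c2 c3 c4 c5 c6 c7 = sc c0 x + sc c1 (A x) + sc c2 (B x) + sc c3 (A (B x)) + sc c4 (B (A x))
     + sc c5 (A (A (B x))) + sc c6 (A (B (A x))) + sc c7 (B (A (A x)))"

lemma G_add: "G x c0 c1 c2 c3 c4 c5 c6 c7 + G x d0 d1 d2 d3 d4 d5 d6 d7
   = G x (c0+d0) (c1+d1) (c2+d2) (c3+d3) (c4+d4) (c5+d5) (c6+d6) (c7+d7)"
  unfolding G_def by (simp add: V.scale_left_distrib add_ac)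

lemma G_diff: "G x c0 c1 c2 c3 c4 c5 c6 c7 - G x d0 d1 d2 d3 d4 d5 d6 d7
   = G x (c0-d0) (c1-d1) (c2-d2) (c3-d3) (c4-d4) (c5-d5) (c6-d6) (c7-d7)"
  unfolding G_def by (simp add: V.scale_left_diff_distrib diff_add_eq add_diff_eq diff_diff_eq2 diff_diff_eq add_ac)

lemma G_scale: "sc t (G x c0 c1 c2 c3 c4 c5 c6 c7) = G x (t*c0) (t*c1) (t*c2) (t*c3) (t*c4) (t*c5) (t*c6) (t*c7)"
  unfolding G_def by (simp add: V.scale_right_distrib)

lemma G3: "A (A (B x)) = G x 0 0 0 0 0 1 0 0" "A (B (A x)) = G x 0 0 0 0 0 0 1 0" "B (A (A x)) = G x 0 0 0 0 0 0 0 1"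
  unfolding G_def by simp_all
lemma G2: "A (B x) = G x 0 0 0 1 0 0 0 0" "B (A x) = G x 0 0 0 0 1 0 0 0"
  unfolding G_def by simp_all
lemma G1: "A x = G x 0 1 0 0 0 0 0 0" "B x = G x 0 0 1 0 0 0 0 0"
  unfolding G_def by simp_all
lemma G0: "sc t x = G x t 0 0 0 0 0 0 0"
  unfolding G_def by simp_all

lemma G_cmp:
  assumes "G x e0 e1 e2 e3 e4 e5 e6 e7 = G x f0 f1 f2 f3 f4 f5 f6 f7"
    "g0 - h0 = t * (e0 - f0)" "g1 - h1 = t * (e1 - f1)" "g2 - h2 = t * (e2 - f2)" "g3 - h3 = t * (e3 - f3)"
    "g4 - h4 = t * (e4 - f4)" "g5 - h5 = t * (e5 - f5)" "g6 - h6 = t * (e6 - f6)" "g7 - h7 = t * (e7 - f7)"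
  shows "G x g0 g1 g2 g3 g4 g5 g6 g7 = G x h0 h1 h2 h3 h4 h5 h6 h7"
proof -
  have "G x g0 g1 g2 g3 g4 g5 g6 g7 - G x h0 h1 h2 h3 h4 h5 h6 h7
    = sc t (G x e0 e1 e2 e3 e4 e5 e6 e7 - G x f0 f1 f2 f3 f4 f5 f6 f7)"
    unfolding G_diff G_scale assms(2-9) ..
  then show ?thesis using assms(1) by simp
qed

lemma star:
  assumes gx: "gamma_op sc q A B C x = sc wc x" and gAx: "gamma_op sc q A B C (A x) = sc wc (A x)"
    and bx: "beta_op sc q A B C x = sc wb x"
  shows "A (A (B x)) + B (A (A x)) - sc (q^2 + inverse (q^2)) (A (B (A x)))
    = sc ((q^2 - inverse (q^2)) * (q - inverse q) * wb) x - sc ((q^2 - inverse (q^2))^2) (B x)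
      - sc ((q - inverse q)^2 * wc) (A x)"
proof -
  define s where "s = inverse (q^2 - inverse (q^2))"
  define p where "p = q + inverse q"
  define Q where "Q = q^2 - inverse (q^2)"
  define qi where "qi = inverse q"
  define wp where "wp = wc / p"
  have p0: "p \<noteq> 0" using pnz by (simp add: p_def)
  have Q0: "Q \<noteq> 0" using snz by (simp add: Q_def)
  have h1: "s * Q = 1" using Q0 by (simp add: s_def Q_def)
  have h2: "p = q + qi" by (simp add: p_def qi_def)
  have h3: "q * qi = 1" using q0 by (simp add: qi_def)
  have h4: "Q = q^2 - qi^2" by (simp add: Q_def qi_def power_inverse)
  have h6: "inverse (q^2) = qi^2" by (simp add: qi_def power_inverse)
  have h5: "wp * p = wc" using p0 by (simp add: wp_def)
  have Cx: "C x = sc wp x - sc s (sc q (A (B x)) - sc qi (B (A x)))"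
    unfolding s_def wp_def p_def qi_def by (rule C_eq[OF gx])
  have CAx: "C (A x) = sc wp (A x) - sc s (sc q (A (B (A x))) - sc qi (B (A (A x))))"
    unfolding s_def wp_def p_def qi_def by (rule C_eq[OF gAx])
  have E: "sc p (B x + sc s (sc q (C (A x)) - sc qi (A (C x)))) = sc wb x"
    using bx by (simp only: beta_op_def s_def p_def qi_def)
  show ?thesis using E h1 h2 h3 h4 h5 h6
    unfolding Q_def[symmetric] qi_def[symmetric]
    apply (simp only: Cx CAx LA.diff LA.scale)
    apply (simp only: G3[of x])
    apply (simp only: G2[of x])?
    apply (simp only: G1[of x])
    apply (simp only: G0[of _ x] G_add G_diff G_scale)
    apply (erule G_cmp[where t = "Q * (q - qi)"])
    by (algebra | simp)+
qed

end

context DM2 begin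

lemma step: assumes "P i" "P (Suc i)" shows "P (Suc (Suc i))"
proof -
  define qi where "qi = inverse q"
  have iq2: "inverse (q^2) = qi^2" by (simp add: qi_def power_inverse)
  have hq: "q * qi = 1" using q0 by (simp add: qi_def)
  have S: "A (A (B (vv i))) + B (A (A (vv i))) - sc (q^2 + inverse (q^2)) (A (B (A (vv i))))
    = sc ((q^2 - inverse (q^2)) * (q - inverse q) * omega_b q a b c lam) (vv i) - sc ((q^2 - inverse (q^2))^2) (B (vv i))
      - sc ((q - inverse q)^2 * omega_c q a b c lam) (A (vv i))"
    by (rule star[OF gamma_vv gamma_Avv beta_vv])
  have J0: "ts i - (q^2 + inverse (q^2)) * ts (Suc i) + ts (Suc (Suc i)) = 0"
    by (rule I0[OF q0 b0 l0])
  have J1: "ph i - (q^2 + inverse (q^2)) * ph (Suc i) + ph (Suc (Suc i))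
    = (q^2 + inverse (q^2) - 1) * (th i * ts i + th (Suc i) * ts (Suc i))
      - th (Suc i) * ts i - th i * ts (Suc i) - (q - inverse q)^2 * omega_c q a b c lam"
    by (rule I1[OF q0 a0 b0 c0 l0])
  have J2: "ph i * (th i - th (Suc i)) + ph (Suc i) * (th i + th (Suc i) - (q^2 + inverse (q^2)) * th i)
   = (q^2 - inverse (q^2)) * (q - inverse q) * omega_b q a b c lam
     - (q^2 - inverse (q^2))^2 * ts i - (q - inverse q)^2 * omega_c q a b c lam * th i
     + (q - inverse q)^2 * (th i)^2 * ts i"
    by (rule I2[OF q0 a0 b0 c0 l0])
  have J3: "ph i * (th (i - 1) - (q^2 + inverse (q^2)) * th i + th (Suc i)) = 0"
  proof (cases i)
    case 0 then show ?thesis by (simp add: ph0)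
  next
    case (Suc j) then show ?thesis using T1[OF q0 a0 l0, of j] by simp
  qed
  have J4: "ph i * ((th (i - 1))^2 + (th i)^2 - (q^2 + inverse (q^2)) * th i * th (i - 1) + (q^2 - inverse (q^2))^2) = 0"
  proof (cases i)
    case 0 then show ?thesis by (simp add: ph0)
  next
    case (Suc j) then show ?thesis using I3[OF q0 a0 l0, of j] by (simp add: algebra_simps)
  qed
  show ?thesis using S J0 J1 J2 J3 J4 hq
    unfolding iq2 qi_def[symmetric]
    apply (simp only: vv_L)
    apply (simp only: A_L B_L[OF assms] L_add L_diff L_scale mult_zero_left mult_zero_right add_0_left add_0_right diff_zero mult_1_left mult_1_right)
    apply (erule key)
    by (algebra | simp)+
qed

end

lemma decomp: "x = (\<Sum>k\<in>Poly_Mapping.keys x. vscale (Poly_Mapping.lookup x k) (verma_m k))"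
proof (rule poly_mapping_eqI)
  fix j
  show "Poly_Mapping.lookup x j = Poly_Mapping.lookup (\<Sum>k\<in>Poly_Mapping.keys x. vscale (Poly_Mapping.lookup x k) (verma_m k)) j"
  proof -
    have "Poly_Mapping.lookup (\<Sum>k\<in>Poly_Mapping.keys x. vscale (Poly_Mapping.lookup x k) (verma_m k)) j
      = (\<Sum>k\<in>Poly_Mapping.keys x. if k = j then Poly_Mapping.lookup x k else 0)"
      unfolding lookup_sum by (rule sum.cong) (auto simp: lookup_m)
    also have "\<dots> = Poly_Mapping.lookup x j"
      by (simp add: sum.delta' Poly_Mapping.in_keys_iff)
    finally show ?thesis by simp
  qed
qed

lemma verma_A_m: "verma_A q a b c lam (verma_m k) = vscale (theta q a lam k) (verma_m k) + verma_m (Suc k)"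
  by (rule poly_mapping_eqI) (auto simp: lookup_add lookup_m)

lemma verma_B_m0: "verma_B q a b c lam (verma_m 0) = vscale (theta_s q b lam 0) (verma_m 0)"
  by (rule poly_mapping_eqI) (auto simp: lookup_add lookup_m)

lemma verma_B_mS: "verma_B q a b c lam (verma_m (Suc k)) = vscale (theta_s q b lam (Suc k)) (verma_m (Suc k))
   + vscale (phi q a b c lam (Suc k)) (verma_m k)"
  by (rule poly_mapping_eqI) (auto simp: lookup_add lookup_m)

context DM2 begin

lemma P0: "P 0" using h1 by (simp add: P_def ph0)

lemma G_cong: "c0 = d0 \<Longrightarrow> c1 = d1 \<Longrightarrow> c2 = d2 \<Longrightarrow> c3 = d3 \<Longrightarrow> c4 = d4 \<Longrightarrow> c5 = d5 \<Longrightarrow> c6 = d6 \<Longrightarrow> c7 = d7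
  \<Longrightarrow> G x c0 c1 c2 c3 c4 c5 c6 c7 = G x d0 d1 d2 d3 d4 d5 d6 d7" by simp

lemma P1: "P (Suc 0)"
proof -
  have e: "B (A v) = sc (ts 1) (A v) + sc (th 0 * (ts 0 - ts 1) + ph 1) v"
    using h2 by (simp add: diff_eq_eq)
  show ?thesis unfolding P_def
    using e h1
    apply (simp add: vv.simps(2) LB.diff LB.scale V.scale_right_diff_distrib)
    apply (simp only: G1[of v] G0[of _ v] G_add G_diff G_scale)
    apply (rule G_cong)
    by (simp_all add: algebra_simps)
qed

lemma P_all: "P i \<and> P (Suc i)"
  by (induction i) (use P0 P1 step in auto)

lemma B_vv0: "B (vv 0) = sc (ts 0) (vv 0)" using P_all[of 0] by (simp add: P_def ph0)
lemma B_vvS: "B (vv (Suc k)) = sc (ts (Suc k)) (vv (Suc k)) + sc (ph (Suc k)) (vv k)"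
  using P_all[of "Suc k"] by (simp add: P_def)

definition fmap :: "(nat \<Rightarrow>\<^sub>0 'a) \<Rightarrow> 'b" where
  "fmap x = (\<Sum>k\<in>Poly_Mapping.keys x. sc (Poly_Mapping.lookup x k) (vv k))"

lemma fmap_sup: assumes "finite S" "Poly_Mapping.keys x \<subseteq> S"
  shows "fmap x = (\<Sum>k\<in>S. sc (Poly_Mapping.lookup x k) (vv k))"
  unfolding fmap_def
  by (rule sum.mono_neutral_left[OF assms(1) assms(2)]) (simp add: Poly_Mapping.in_keys_iff)

lemma fmap_add: "fmap (x + y) = fmap x + fmap y"
proof -
  let ?S = "Poly_Mapping.keys x \<union> Poly_Mapping.keys y"
  have "fmap (x + y) = (\<Sum>k\<in>?S. sc (Poly_Mapping.lookup (x + y) k) (vv k))"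
    by (rule fmap_sup) (use keys_add[of x y] in auto)
  also have "\<dots> = (\<Sum>k\<in>?S. sc (Poly_Mapping.lookup x k) (vv k)) + (\<Sum>k\<in>?S. sc (Poly_Mapping.lookup y k) (vv k))"
    by (simp add: lookup_add V.scale_left_distrib sum.distrib)
  also have "\<dots> = fmap x + fmap y"
    by (simp add: fmap_sup[symmetric])
  finally show ?thesis .
qed

lemma fmap_scale: "fmap (vscale t x) = sc t (fmap x)"
proof -
  have "fmap (vscale t x) = (\<Sum>k\<in>Poly_Mapping.keys x. sc (Poly_Mapping.lookup (vscale t x) k) (vv k))"
    by (rule fmap_sup) (auto simp: Poly_Mapping.in_keys_iff)
  then show ?thesis by (simp add: fmap_def V.scale_sum_right)
qed

lemma fmap_lin: "Vector_Spaces.linear vscale sc fmap"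
  unfolding Vector_Spaces.linear_iff using vscale_vs vs fmap_add fmap_scale by blast

sublocale FM: module_hom vscale sc fmap using fmap_lin by (simp add: module_hom_iff_linear)

lemma fmap_m: "fmap (verma_m k) = vv k"
  by (simp add: fmap_def verma_m_def)

lemma fmap_comm:
  assumes g: "module_hom vscale vscale g" and h: "module_hom sc sc h"
    and gh: "\<And>k. fmap (g (verma_m k)) = h (vv k)"
  shows "fmap (g x) = h (fmap x)"
proof -
  interpret g: module_hom vscale vscale g by (rule g)
  interpret h: module_hom sc sc h by (rule h)
  have "fmap (g x) = fmap (g (\<Sum>k\<in>Poly_Mapping.keys x. vscale (Poly_Mapping.lookup x k) (verma_m k)))"
    using decomp[of x] by simp
  also have "\<dots> = (\<Sum>k\<in>Poly_Mapping.keys x. sc (Poly_Mapping.lookup x k) (h (vv k)))"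
    by (simp add: g.sum g.scale FM.sum FM.scale gh)
  also have "\<dots> = h (fmap x)"
    by (simp add: fmap_def h.sum h.scale)
  finally show ?thesis .
qed

lemma fmap_A: "fmap (verma_A q a b c lam x) = A (fmap x)"
proof (rule fmap_comm)
  show "module_hom vscale vscale (verma_A q a b c lam)" using verma_A_lin by (simp add: module_hom_iff_linear)
  show "module_hom sc sc A" by (rule LA.module_hom_axioms)
  fix k show "fmap (verma_A q a b c lam (verma_m k)) = A (vv k)"
    by (simp add: verma_A_m FM.add FM.scale fmap_m A_vv add.commute)
qed

lemma fmap_B: "fmap (verma_B q a b c lam x) = B (fmap x)"
proof (rule fmap_comm)
  show "module_hom vscale vscale (verma_B q a b c lam)" using verma_B_lin by (simp add: module_hom_iff_linear)
  show "module_hom sc sc B" by (rule LB.module_hom_axioms)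
  fix k show "fmap (verma_B q a b c lam (verma_m k)) = B (vv k)"
    by (cases k) (simp_all add: verma_B_m0 verma_B_mS FM.add FM.scale fmap_m B_vv0 B_vvS h1)
qed

lemma gamma_add: "gamma_op sc q A B C (x + y) = gamma_op sc q A B C x + gamma_op sc q A B C y"
proof -
  have "gamma_op sc q A B C (x + y) = gamma_op sc q A B C (x - sc (-1) y)" by simp
  also have "\<dots> = gamma_op sc q A B C x + gamma_op sc q A B C y"
    unfolding gamma_diff gamma_scale by simp
  finally show ?thesis .
qed

sublocale GM: module_hom sc sc "gamma_op sc q A B C"
  by unfold_locales (simp_all add: gamma_add gamma_scale)

lemma gamma_fmap: "gamma_op sc q A B C (fmap x) = sc (omega_c q a b c lam) (fmap x)"
  by (simp add: fmap_def GM.sum GM.scale gamma_vv V.scale_sum_right mult.commute)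

lemma fmap_C: "fmap (verma_C q a b c lam x) = C (fmap x)"
  unfolding C_eq[OF gamma_fmap] verma_C_def
  by (simp add: FM.diff FM.scale fmap_A fmap_B)

lemma fmap_hom: "delta_hom vscale (verma_A q a b c lam) (verma_B q a b c lam) (verma_C q a b c lam) sc A B C fmap"
  unfolding delta_hom_def using fmap_lin fmap_A fmap_B fmap_C by blast

lemma fmap_v: "fmap (verma_m 0) = v" by (simp add: fmap_m)

end

lemma alg0: fixes q qi s pinv T T1 S0 F W Bw :: "'f::field"
  assumes g1: "s * (q^2 - qi^2) = 1" and g2: "pinv * (q + qi) = 1" and g3: "q * qi = 1"
  and J2: "0 * (T - T1) + F * (T + T1 - (q^2 + qi^2) * T) = (q^2 - qi^2) * (q - qi) * Bw - (q^2 - qi^2)^2 * S0 - (q - qi)^2 * W * T + (q - qi)^2 * T^2 * S0"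
  shows "(q + qi) * (S0 + s * (q * (W * pinv * T - s * (q * (T * (S0 * T + F)) - qi * (S0 * (T * T) + F * (T1 + T))))
     - qi * (T * (W * pinv - s * (q * (T * S0) - qi * (S0 * T + F)))))) = Bw"
proof -
  have hp: "pinv = s * (q - qi)" using g1 g2 by algebra
  have hB: "Bw = s * s * (q + qi) * ((q^2 - qi^2) * (q - qi) * Bw)" using g1 by algebra
  have J2': "(q^2 - qi^2) * (q - qi) * Bw = F * (T + T1 - (q^2 + qi^2) * T) + (q^2 - qi^2)^2 * S0 + (q - qi)^2 * W * T - (q - qi)^2 * T^2 * S0"
    using J2 by (simp add: algebra_simps)
  show ?thesis unfolding hp
    apply (subst hB)
    unfolding J2'
    using g1 g3 by algebra
qed

lemma alg1: fixes q qi s pinv T T1 S0 S1 F1 F2 W :: "'f::field"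
  assumes g1: "s * (q^2 - qi^2) = 1" and g2: "pinv * (q + qi) = 1" and g3: "q * qi = 1"
  and J1: "0 - (q^2 + qi^2) * F1 + F2 = (q^2 + qi^2 - 1) * (T * S0 + T1 * S1) - T1 * S0 - T * S1 - (q - qi)^2 * W"
  shows "q * (W * pinv - s * (q * (T1 * S1 + (S0 * T + F1)) - qi * (S1 * (T1 + T) + F2)))
    = qi * (W * pinv - s * (q * (T * S0) - qi * (S0 * T + F1)) - T1 * (s * (q * S0 - qi * S1)))"
proof -
  have hp: "pinv = s * (q - qi)" using g1 g2 by algebra
  have J1': "F2 = (q^2 + qi^2) * F1 + (q^2 + qi^2 - 1) * (T * S0 + T1 * S1) - T1 * S0 - T * S1 - (q - qi)^2 * W"
    using J1 by (simp add: algebra_simps)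
  show ?thesis unfolding hp J1'
    using g3 by algebra
qed

lemma alg2: fixes q qi S0 S1 S2 :: "'f::field"
  assumes g3: "q * qi = 1" and J0: "S0 - (q^2 + qi^2) * S1 + S2 = 0"
  shows "qi * (q * S0 - qi * S1) = q * (q * S1 - qi * S2)"
  using g3 J0 by algebra


lemma verma_beta0:
  fixes q a b c lam :: "'f::field"
  assumes q0: "q \<noteq> 0" and q4: "q^4 \<noteq> 1" and a0: "a \<noteq> 0" and b0: "b \<noteq> 0" and c0: "c \<noteq> 0" and l0: "lam \<noteq> 0"
  shows "beta_op vscale q (verma_A q a b c lam) (verma_B q a b c lam) (verma_C q a b c lam) (verma_m 0)
    = vscale (omega_b q a b c lam) (verma_m 0)"
proof (rule poly_mapping_eqI)
  define qi where "qi = inverse q"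
  define s where "s = inverse (q^2 - qi^2)"
  define pinv where "pinv = inverse (q + qi)"
  have f1: "inverse q = qi" by (simp add: qi_def)
  have f2: "inverse (q^2) = qi^2" by (simp add: qi_def power_inverse)
  have f3: "inverse (q^2 - qi^2) = s" by (simp add: s_def)
  have f4: "inverse (q + qi) = pinv" by (simp add: pinv_def)
  have Q0: "q^2 - qi^2 \<noteq> 0"
  proof
    assume "q^2 - qi^2 = 0"
    then have "q^2 * q^2 - 1 = 0" using q0 by (simp add: qi_def field_simps power2_eq_square)
    then have "q^4 = 1" by (simp add: power4_eq_xxxx power2_eq_square mult.assoc)
    with q4 show False by simp
  qed
  have P0: "q + qi \<noteq> 0"
  proof
    assume "q + qi = 0"
    then have "q * q + 1 = 0" using q0 by (simp add: qi_def field_simps)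
    then have "q * q = -1" by (simp add: eq_neg_iff_add_eq_0)
    then have "q^4 = 1" by (simp add: power4_eq_xxxx)
    with q4 show False by simp
  qed
  have g1: "s * (q^2 - qi^2) = 1" using Q0 by (simp add: s_def)
  have g2: "pinv * (q + qi) = 1" using P0 by (simp add: pinv_def)
  have g3: "q * qi = 1" using q0 by (simp add: qi_def)
  have ph0: "phi q a b c lam 0 = 0" by (simp add: phi_def)
  have J0: "theta_s q b lam 0 - (q^2 + qi^2) * theta_s q b lam (Suc 0) + theta_s q b lam (Suc (Suc 0)) = 0"
    using I0[OF q0 b0 l0, of 0] unfolding f2 .
  have J1: "phi q a b c lam 0 - (q^2 + qi^2) * phi q a b c lam (Suc 0) + phi q a b c lam (Suc (Suc 0))
    = (q^2 + qi^2 - 1) * (theta q a lam 0 * theta_s q b lam 0 + theta q a lam (Suc 0) * theta_s q b lam (Suc 0))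
      - theta q a lam (Suc 0) * theta_s q b lam 0 - theta q a lam 0 * theta_s q b lam (Suc 0)
      - (q - qi)^2 * omega_c q a b c lam"
    using I1[OF q0 a0 b0 c0 l0, of 0] unfolding f1 f2 .
  have J2: "phi q a b c lam 0 * (theta q a lam 0 - theta q a lam (Suc 0))
     + phi q a b c lam (Suc 0) * (theta q a lam 0 + theta q a lam (Suc 0) - (q^2 + qi^2) * theta q a lam 0)
   = (q^2 - qi^2) * (q - qi) * omega_b q a b c lam
     - (q^2 - qi^2)^2 * theta_s q b lam 0
     - (q - qi)^2 * omega_c q a b c lam * theta q a lam 0
     + (q - qi)^2 * (theta q a lam 0)^2 * theta_s q b lam 0"
    using I2[OF q0 a0 b0 c0 l0, of 0] unfolding f1 f2 .
  note facts = g1 g2 g3 J0 J1 J2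
  fix j
  show "Poly_Mapping.lookup (beta_op vscale q (verma_A q a b c lam) (verma_B q a b c lam) (verma_C q a b c lam) (verma_m 0)) j
    = Poly_Mapping.lookup (vscale (omega_b q a b c lam) (verma_m 0)) j"
  proof (cases j)
    case 0
    show ?thesis unfolding 0
      apply (simp add: beta_op_def verma_C_def lookup_add lookup_minus lookup_m divide_inverse)
      apply (simp only: f1 f2 f3 f4)
      apply (rule alg0[OF g1 g2 g3])
      using J2 by (simp add: ph0)
  next
    case (Suc j1)
    show ?thesis
    proof (cases j1)
      case 0
      show ?thesis unfolding Suc 0
        apply (simp add: beta_op_def verma_C_def lookup_add lookup_minus lookup_m divide_inverse)
        apply (simp only: f1 f2 f3 f4)
        apply (rule disjI2)+
        apply (rule alg1[OF g1 g2 g3])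
        using J1 by (simp add: ph0)
    next
      case (Suc j2)
      show ?thesis
      proof (cases j2)
        case 0
        show ?thesis unfolding Suc \<open>j = Suc j1\<close> 0
          apply (simp add: beta_op_def verma_C_def lookup_add lookup_minus lookup_m divide_inverse)
          apply (simp only: f1 f2 f3 f4)
          apply (rule disjI2)+
          by (rule alg2[OF g3 J0])
      next
        case (Suc j3)
        then show ?thesis using \<open>j1 = Suc j2\<close> \<open>j = Suc j1\<close>
          by (simp add: beta_op_def verma_C_def lookup_add lookup_minus lookup_m divide_inverse)
      qed
    qed
  qed
qed


lemma verma_h2: "verma_B q a b c lam (verma_A q a b c lam (verma_m 0)) - vscale (theta_s q b lam 1) (verma_A q a b c lam (verma_m 0))
   = vscale (theta q a lam 0 * (theta_s q b lam 0 - theta_s q b lam 1) + phi q a b c lam 1) (verma_m 0)"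
proof (rule poly_mapping_eqI)
  fix j show "Poly_Mapping.lookup (verma_B q a b c lam (verma_A q a b c lam (verma_m 0)) - vscale (theta_s q b lam 1) (verma_A q a b c lam (verma_m 0))) j
    = Poly_Mapping.lookup (vscale (theta q a lam 0 * (theta_s q b lam 0 - theta_s q b lam 1) + phi q a b c lam 1) (verma_m 0)) j"
    by (cases j) (auto simp: lookup_minus lookup_m algebra_simps)
qed

lemma verma_gamma:
  fixes q :: "'f::field"
  assumes "q + inverse q \<noteq> 0"
  shows "gamma_op vscale q (verma_A q a b c lam) (verma_B q a b c lam) (verma_C q a b c lam) y = vscale (omega_c q a b c lam) y"
proof -
  interpret VS: vector_space "vscale :: 'f \<Rightarrow> _" by (rule vscale_vs)
  show ?thesis using assms unfolding gamma_op_def verma_C_def by simp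
qed

lemma hom_ops:
  assumes hom: "delta_hom vscale A1 B1 C1 sc A B C f"
  shows "f (beta_op vscale q A1 B1 C1 y) = beta_op sc q A B C (f y)"
    "f (gamma_op vscale q A1 B1 C1 y) = gamma_op sc q A B C (f y)"
proof -
  have lin: "Vector_Spaces.linear vscale sc f" and fA: "\<And>x. f (A1 x) = A (f x)"
    and fB: "\<And>x. f (B1 x) = B (f x)" and fC: "\<And>x. f (C1 x) = C (f x)"
    using hom unfolding delta_hom_def by auto
  interpret F: module_hom vscale sc f using lin by (simp add: module_hom_iff_linear)
  show "f (beta_op vscale q A1 B1 C1 y) = beta_op sc q A B C (f y)"
    unfolding beta_op_def by (simp add: F.add F.scale F.diff fA fB fC)
  show "f (gamma_op vscale q A1 B1 C1 y) = gamma_op sc q A B C (f y)"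
    unfolding gamma_op_def by (simp add: F.add F.scale F.diff fA fB fC)
qed

lemma q_facts:
  fixes q :: "'f::field"
  assumes "\<exists>d. root_of_unity_order q d \<and> d \<notin> {1, 2, 4}"
  shows "q \<noteq> 0" "q^4 \<noteq> 1"
proof -
  obtain d where d: "0 < d" "q ^ d = 1" "\<And>k. 0 < k \<Longrightarrow> k < d \<Longrightarrow> q ^ k \<noteq> 1" "d \<notin> {1, 2, 4}"
    using assms unfolding root_of_unity_order_def by blast
  show "q \<noteq> 0" using d(1,2) by (cases d) auto
  show "q^4 \<noteq> 1"
  proof
    assume q4: "q^4 = 1"
    have "\<not> 4 < d" using d(3)[of 4] q4 by auto
    then have "d = 3" using d(1,4) by auto
    then have q3: "q^3 = 1" using d(2) by simp
    have "q^4 = q * q^3" by (simp add: power_Suc[symmetric])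
    then have "q = 1" using q4 q3 by simp
    then show False using d(3)[of 1] \<open>d = 3\<close> by simp
  qed
qed

theorem proposition3p1:
  fixes q a b c lam :: "'f::alg_closed_field"
    and sc :: "'f \<Rightarrow> 'v::ab_group_add \<Rightarrow> 'v"
    and A B C :: "'v \<Rightarrow> 'v"
    and v :: 'v
  assumes q_root: "\<exists>d. root_of_unity_order q d \<and> d \<notin> {1, 2, 4}"
    and a_nz: "a \<noteq> 0" and b_nz: "b \<noteq> 0" and c_nz: "c \<noteq> 0" and lam_nz: "lam \<noteq> 0"
    and V_module: "delta_module sc q A B C"
  shows "(\<exists>f. delta_hom vscale (verma_A q a b c lam) (verma_B q a b c lam) (verma_C q a b c lam)
                        sc A B C f
             \<and> f (verma_m 0) = v)
     \<longleftrightarrow>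
     (B v = sc (theta_s q b lam 0) v
      \<and> B (A v) - sc (theta_s q b lam 1) (A v)
          = sc (theta q a lam 0 * (theta_s q b lam 0 - theta_s q b lam 1) + phi q a b c lam 1) v
      \<and> beta_op sc q A B C v = sc (omega_b q a b c lam) v
      \<and> gamma_op sc q A B C v = sc (omega_c q a b c lam) v)"
proof -
  note qf = q_facts[OF q_root]
  have vs: "vector_space sc" and lA: "Vector_Spaces.linear sc sc A" and lB: "Vector_Spaces.linear sc sc B"
    and lC: "Vector_Spaces.linear sc sc C"
    and cb: "beta_op sc q A B C \<circ> A = A \<circ> beta_op sc q A B C"
    and cg: "gamma_op sc q A B C \<circ> A = A \<circ> gamma_op sc q A B C"
    using V_module unfolding delta_module_def by auto
  have dm: "DM sc q A B C" unfolding DM_def using vs lA lB lC cb cg qf by blast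
  interpret DM sc q A B C by (rule dm)
  show ?thesis
  proof
    assume "\<exists>f. delta_hom vscale (verma_A q a b c lam) (verma_B q a b c lam) (verma_C q a b c lam) sc A B C f
             \<and> f (verma_m 0) = v"
    then obtain f where hom: "delta_hom vscale (verma_A q a b c lam) (verma_B q a b c lam) (verma_C q a b c lam) sc A B C f"
      and fv: "f (verma_m 0) = v" by blast
    have lin: "Vector_Spaces.linear vscale sc f" and fA: "\<And>x. f (verma_A q a b c lam x) = A (f x)"
      and fB: "\<And>x. f (verma_B q a b c lam x) = B (f x)"
      using hom unfolding delta_hom_def by auto
    interpret F: module_hom vscale sc f using lin by (simp add: module_hom_iff_linear)
    have 1: "B v = sc (theta_s q b lam 0) v"
      using fB[of "verma_m 0"] by (simp add: verma_B_m0 F.scale fv)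
    have 2: "B (A v) - sc (theta_s q b lam 1) (A v)
          = sc (theta q a lam 0 * (theta_s q b lam 0 - theta_s q b lam 1) + phi q a b c lam 1) v"
      using arg_cong[OF verma_h2[of q a b c lam], of f] by (simp add: F.diff F.scale fA fB fv)
    have 3: "beta_op sc q A B C v = sc (omega_b q a b c lam) v"
      using hom_ops(1)[OF hom, of q "verma_m 0"]
      by (simp add: verma_beta0[OF qf a_nz b_nz c_nz lam_nz] F.scale fv)
    have 4: "gamma_op sc q A B C v = sc (omega_c q a b c lam) v"
      using hom_ops(2)[OF hom, of q "verma_m 0"]
      by (simp add: verma_gamma[OF pnz] F.scale fv)
    show "B v = sc (theta_s q b lam 0) v
      \<and> B (A v) - sc (theta_s q b lam 1) (A v)
          = sc (theta q a lam 0 * (theta_s q b lam 0 - theta_s q b lam 1) + phi q a b c lam 1) v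
      \<and> beta_op sc q A B C v = sc (omega_b q a b c lam) v
      \<and> gamma_op sc q A B C v = sc (omega_c q a b c lam) v"
      using 1 2 3 4 by blast
  next
    assume H: "B v = sc (theta_s q b lam 0) v
      \<and> B (A v) - sc (theta_s q b lam 1) (A v)
          = sc (theta q a lam 0 * (theta_s q b lam 0 - theta_s q b lam 1) + phi q a b c lam 1) v
      \<and> beta_op sc q A B C v = sc (omega_b q a b c lam) v
      \<and> gamma_op sc q A B C v = sc (omega_c q a b c lam) v"
    have dm2: "DM2 sc q A B C a b c lam v"
      unfolding DM2_def DM2_axioms_def using dm a_nz b_nz c_nz lam_nz H by blast
    interpret DM2 sc q A B C a b c lam v by (rule dm2)
    show "\<exists>f. delta_hom vscale (verma_A q a b c lam) (verma_B q a b c lam) (verma_C q a b c lam) sc A B C f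
             \<and> f (verma_m 0) = v"
      using fmap_hom fmap_v by blast
  qed
qed


end
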